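(* Let $\mathcal{D}$ be the set of partitions into distinct parts, $\mathcal{D}_o$ the set of partitions into an odd number of distinct parts, $\nu(\pi)$ the number of parts of $\pi$, and for $\pi=(\lambda_1,\lambda_2,\dots)$, $\mathcal{O}(\pi)=\lambda_1+\lambda_3+\lambda_5+\cdots$. Let $\tilde C_{\le -1}$ and $\tilde C_{=0}$ be the sets of partitions with crank $\le -1$ and crank $=0$ respectively. Then, as formal power series, \[\sum_{\pi\in\mathcal{D}_o}q^{\mathcal{O}(\pi)}=\sum_{\pi\in\tilde C_{\le-1}}q^{|\pi|}\quad\text{and}\quad\sum_{\pi\in\mathcal{D}}(-1)^{\nu(\pi)}q^{\mathcal{O}(\pi)}=-q+\sum_{\pi\in\tilde C_{=0}}q^{|\pi|}.\]
   Context: A partition is a finite weakly decreasing sequence of positive integers; $|\pi|$ is the sum of its parts; the empty partition has $0$ parts. The crank of a partition $\pi$ is defined as: the largest part of $\pi$ if $1$ is not a part of $\pi$ (the empty partition has crank $0$); otherwise, (the number of parts of $\pi$ larger than the number of $1$'s in $\pi$) minus (the number of $1$'s in $\pi$). *)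

theory Defs
  imports "HOL-Computational_Algebra.Formal_Power_Series"
begin

definition is_partition :: "nat list \<Rightarrow> bool" where
  "is_partition p \<longleftrightarrow> sorted_wrt (\<ge>) p \<and> (\<forall>x\<in>set p. 0 < x)"

definition is_distinct_partition :: "nat list \<Rightarrow> bool" where
  "is_distinct_partition p \<longleftrightarrow> sorted_wrt (>) p \<and> (\<forall>x\<in>set p. 0 < x)"

abbreviation nparts :: "nat list \<Rightarrow> nat" where "nparts p \<equiv> length p"
abbreviation psize :: "nat list \<Rightarrow> nat" where "psize p \<equiv> sum_list p"

text \<open>Sum of the parts in odd positions (1st, 3rd, 5th, ...), i.e. 0-based even indices.\<close>
definition odd_pos_sum :: "nat list \<Rightarrow> nat" where
  "odd_pos_sum p = sum_list (map (\<lambda>i. p ! i) (filter even [0..<length p]))"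

definition ones :: "nat list \<Rightarrow> nat" where
  "ones p = length (filter (\<lambda>x. x = 1) p)"

definition crank :: "nat list \<Rightarrow> int" where
  "crank p = (if 1 \<notin> set p then (if p = [] then 0 else int (Max (set p)))
              else int (length (filter (\<lambda>x. x > ones p) p)) - int (ones p))"

end

theory Submission
  imports Defs
begin

unbundle fps_syntax


fun hd0 :: "nat list \<Rightarrow> nat" where "hd0 [] = 0" | "hd0 (x#xs) = x"

fun toD :: "nat list \<Rightarrow> nat list" where
  "toD [] = []" | "toD (v # vs) = (v + hd0 vs + length vs + 1) # toD vs"

fun ofD :: "nat list \<Rightarrow> nat list" where
  "ofD [] = []" | "ofD (x # xs) = (x - hd0 (ofD xs) - length xs - 1) # ofD xs"

fun dec2 :: "nat list \<Rightarrow> bool" where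
  "dec2 (a # b # c # xs) = (c \<le> a \<and> dec2 (b # c # xs))" | "dec2 _ = True"

lemma dec2_Cons: "dec2 (v # V) \<longleftrightarrow> hd0 (tl V) \<le> v \<and> dec2 V"
  by (cases V rule: dec2.cases) auto

lemma length_toD[simp]: "length (toD V) = length V" by (induct V) auto
lemma length_ofD[simp]: "length (ofD V) = length V" by (induct V) auto

lemma hd0_toD: "hd0 (toD (v # vs)) = v + hd0 vs + length vs + 1" by simp

lemma toD_distinct: "dec2 V \<Longrightarrow> is_distinct_partition (toD V)"
proof (induct V)
  case Nil then show ?case by (simp add: is_distinct_partition_def)
next
  case (Cons v vs)
  then have d: "dec2 vs" and h: "hd0 (tl vs) \<le> v" by (auto simp: dec2_Cons)
  have IH: "is_distinct_partition (toD vs)" using Cons d by simp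
  have "\<forall>y\<in>set (toD vs). y < v + hd0 vs + length vs + 1"
  proof (cases vs)
    case Nil then show ?thesis by simp
  next
    case (Cons b ws)
    have "\<forall>y\<in>set (toD vs). y \<le> hd0 (toD vs)"
      using IH Cons by (auto simp: is_distinct_partition_def less_imp_le)
    then show ?thesis using Cons h by auto
  qed
  then show ?case using IH by (simp add: is_distinct_partition_def)
qed

lemma ofD_toD: "ofD (toD V) = V"
  by (induct V) auto

lemma toD_ofD: "is_distinct_partition L \<Longrightarrow> toD (ofD L) = L \<and> dec2 (ofD L)"
proof (induct L)
  case Nil then show ?case by simp
next
  case (Cons x xs)
  have dx: "is_distinct_partition xs" and gt: "\<forall>y\<in>set xs. y < x" and xpos: "0 < x"
    using Cons.prems by (auto simp: is_distinct_partition_def)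
  with Cons.hyps have IH: "toD (ofD xs) = xs" "dec2 (ofD xs)" by auto
  define V where "V = ofD xs"
  have key: "hd0 V + hd0 (tl V) + length xs + 1 \<le> x"
  proof (cases xs)
    case Nil then show ?thesis using xpos V_def by simp
  next
    case (Cons y ys)
    then obtain v vs where Vv: "V = v # vs" using V_def by (cases V) auto
    have "y = v + hd0 vs + length vs + 1" using IH(1) Cons Vv V_def by auto
    moreover have "length vs = length ys" using Vv Cons V_def by (metis length_Cons length_ofD nat.inject)
    moreover have "y < x" using gt Cons by simp
    ultimately show ?thesis using Vv Cons by simp
  qed
  have "toD (ofD (x # xs)) = x # xs"
    using key IH V_def by simp
  moreover have "dec2 (ofD (x # xs))"
    using key IH V_def by (simp add: dec2_Cons)
  ultimately show ?case by simp
qed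

fun opsum :: "nat list \<Rightarrow> nat" where
  "opsum [] = 0" | "opsum [x] = x" | "opsum (x # y # zs) = x + opsum zs"

lemma upt_0_SS: "[0..<Suc (Suc n)] = 0 # 1 # map (\<lambda>i. i + 2) [0..<n]"
  by (induct n) auto

lemma odd_pos_sum_opsum: "odd_pos_sum xs = opsum xs"
proof (induct xs rule: opsum.induct)
  case 1 then show ?case by (simp add: odd_pos_sum_def)
next
  case (2 x) then show ?case by (simp add: odd_pos_sum_def)
next
  case (3 x y zs)
  have e: "[0..<length (x#y#zs)] = 0 # 1 # map (\<lambda>i. i + 2) [0..<length zs]"
    by (simp only: length_Cons upt_0_SS)
  have "filter even [0..<length (x#y#zs)] = 0 # map (\<lambda>i. i + 2) (filter even [0..<length zs])"
    unfolding e by (simp add: filter_map o_def)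
  then have "odd_pos_sum (x#y#zs) = x + odd_pos_sum zs"
    by (simp add: odd_pos_sum_def o_def)
  then show ?case using 3 by simp
qed

definition cc :: "nat \<Rightarrow> nat" where "cc l = ((l + 1) div 2) * ((l + 2) div 2)"

lemma cc_SS: "cc (Suc (Suc l)) = cc l + l + 2"
  unfolding cc_def by (cases "even l") (auto elim!: evenE oddE simp: algebra_simps)

lemma opsum_toD: "opsum (toD V) = sum_list V + cc (length V)"
proof (induct V rule: induct_list012)
  case 1 then show ?case by (simp add: cc_def)
next
  case (2 x) then show ?case by (simp add: cc_def)
next
  case (3 x y zs)
  then show ?case by (simp add: cc_SS)
qed



fun evs :: "'a list \<Rightarrow> 'a list" and ods :: "'a list \<Rightarrow> 'a list" where
  "evs [] = []" | "evs (x # xs) = x # ods xs" | "ods [] = []" | "ods (x # xs) = evs xs"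

function inter :: "'a list \<Rightarrow> 'a list \<Rightarrow> 'a list" where
  "inter [] ys = ys" | "inter (x # xs) ys = x # inter ys xs"
  by pat_completeness auto
termination by (relation "measure (\<lambda>(xs,ys). length xs + length ys)") auto

lemma len_evs_ods: "length (evs V) = (length V + 1) div 2 \<and> length (ods V) = length V div 2"
  by (induct V) auto

lemma sum_evs_ods: "sum_list (evs V) + sum_list (ods V) = sum_list (V::nat list)"
proof (induct V)
  case (Cons a V)
  have "sum_list (evs (a#V)) + sum_list (ods (a#V)) = a + (sum_list (evs V) + sum_list (ods V))" by (simp add: add_ac)
  then show ?case using Cons by simp
qed simp

lemma inter_evs_ods: "inter (evs V) (ods V) = V"
  by (induct V) auto

lemma evs_ods_inter:
  "length R \<le> length P \<Longrightarrow> length P \<le> Suc (length R) \<Longrightarrow> evs (inter P R) = P \<and> ods (inter P R) = R"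
proof (induction "length P + length R" arbitrary: P R rule: less_induct)
  case less
  show ?case
  proof (cases P)
    case Nil then show ?thesis using less.prems by auto
  next
    case (Cons x xs)
    have "evs (inter R xs) = R \<and> ods (inter R xs) = xs"
      using less.hyps[of R xs] less.prems Cons by auto
    then show ?thesis using Cons by simp
  qed
qed

lemma sorted_Cons_hd0: "sorted_wrt (\<ge>) (a # L) \<longleftrightarrow> hd0 L \<le> a \<and> sorted_wrt (\<ge>) (L::nat list)"
  by (cases L) (auto simp: sorted_wrt2 transp_def)

lemma hd0_ods: "hd0 (ods V) = hd0 (tl V)"
proof (cases V)
  case Nil then show ?thesis by simp
next
  case (Cons b W) then show ?thesis by (cases W) auto
qed

lemma dec2_iff: "dec2 V \<longleftrightarrow> sorted_wrt (\<ge>) (evs V) \<and> sorted_wrt (\<ge>) (ods V)"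
proof (induct V)
  case Nil then show ?case by simp
next
  case (Cons a V)
  have 1: "dec2 (a#V) \<longleftrightarrow> hd0 (tl V) \<le> a \<and> dec2 V" by (rule dec2_Cons)
  have 2: "sorted_wrt (\<ge>) (evs (a#V)) \<longleftrightarrow> hd0 (ods V) \<le> a \<and> sorted_wrt (\<ge>) (ods V)"
    by (simp only: evs.simps sorted_Cons_hd0)
  have 3: "ods (a # V) = evs V" by simp
  show ?case unfolding 1 2 3 hd0_ods Cons by blast
qed

definition SL :: "nat \<Rightarrow> nat list set" where
  "SL N = {xs. length xs = N \<and> sorted_wrt (\<ge>) xs}"

lemma finite_SL_sum: "finite {xs\<in>SL N. sum_list xs = w}"
proof -
  have "{xs\<in>SL N. sum_list xs = w} \<subseteq> {xs. set xs \<subseteq> {..w} \<and> length xs = N}"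
    by (auto simp: SL_def member_le_sum_list)
  then show ?thesis using finite_lists_length_eq[of "{..w}" N] finite_subset by blast
qed

lemma card_pairs:
  fixes f :: "'a \<Rightarrow> nat" and g :: "'b \<Rightarrow> nat"
  assumes "\<And>i. finite {x\<in>A. f x = i}" "\<And>j. finite {y\<in>B. g y = j}"
  shows "card {(x,y). x\<in>A \<and> y\<in>B \<and> f x + g y = n}
       = (\<Sum>i\<le>n. card {x\<in>A. f x = i} * card {y\<in>B. g y = n - i})"
proof -
  have e: "{(x,y). x\<in>A \<and> y\<in>B \<and> f x + g y = n} = (\<Union>i\<in>{..n}. {x\<in>A. f x = i} \<times> {y\<in>B. g y = n - i})"
    by auto
  have "card (\<Union>i\<in>{..n}. {x\<in>A. f x = i} \<times> {y\<in>B. g y = n - i})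
      = (\<Sum>i\<le>n. card ({x\<in>A. f x = i} \<times> {y\<in>B. g y = n - i}))"
    by (rule card_UN_disjoint) (use assms in auto)
  then show ?thesis unfolding e by (simp add: card_cartesian_product)
qed

definition cSL :: "nat \<Rightarrow> nat \<Rightarrow> nat" where "cSL N w = card {xs\<in>SL N. sum_list xs = w}"

definition W :: "nat \<Rightarrow> int fps" where "W N = Abs_fps (\<lambda>w. int (cSL N w))"

lemma pairs_fps:
  "int (card {(P,R). P \<in> SL a \<and> R \<in> SL b \<and> sum_list P + sum_list R = w}) = (W a * W b) $ w"
proof -
  have "card {(P,R). P \<in> SL a \<and> R \<in> SL b \<and> sum_list P + sum_list R = w}
      = (\<Sum>i\<le>w. cSL a i * cSL b (w - i))"
    unfolding cSL_def by (rule card_pairs) (rule finite_SL_sum)+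
  then show ?thesis by (simp add: fps_mult_nth W_def atLeast0AtMost)
qed

definition Dl :: "nat \<Rightarrow> nat \<Rightarrow> nat list set" where
  "Dl l n = {p. is_distinct_partition p \<and> length p = l \<and> odd_pos_sum p = n}"

lemma Dl_card:
  "int (card (Dl l n)) = (fps_X ^ cc l * W ((l + 1) div 2) * W (l div 2)) $ n"
proof (cases "cc l \<le> n")
  case False
  have "Dl l n = {}"
  proof -
    { fix p assume "p \<in> Dl l n"
      then have "is_distinct_partition p" "length p = l" "odd_pos_sum p = n" by (auto simp: Dl_def)
      then have "n = sum_list (ofD p) + cc l"
        using toD_ofD[of p] opsum_toD[of "ofD p"] by (simp add: odd_pos_sum_opsum)
      then have False using False by simp }
    then show ?thesis by blast
  qed
  then show ?thesis using False by (simp add: fps_X_power_mult_nth mult.assoc)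
next
  case True
  let ?A = "{(P,R). P \<in> SL ((l + 1) div 2) \<and> R \<in> SL (l div 2) \<and> sum_list P + sum_list R = n - cc l}"
  have "bij_betw (\<lambda>p. (evs (ofD p), ods (ofD p))) (Dl l n) ?A"
  proof (rule bij_betw_byWitness[where f'="\<lambda>(P,R). toD (inter P R)"])
    show "\<forall>a\<in>Dl l n. (\<lambda>(P,R). toD (inter P R)) (evs (ofD a), ods (ofD a)) = a"
    proof
      fix a assume "a \<in> Dl l n"
      then have "is_distinct_partition a" by (simp add: Dl_def)
      then show "(\<lambda>(P,R). toD (inter P R)) (evs (ofD a), ods (ofD a)) = a"
        using toD_ofD[of a] by (simp only: inter_evs_ods prod.case)
    qed
    show "\<forall>a'\<in>?A. (\<lambda>p. (evs (ofD p), ods (ofD p))) ((\<lambda>(P,R). toD (inter P R)) a') = a'"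
    proof
      fix PR assume "PR \<in> ?A"
      then obtain P R where PReq: "PR = (P,R)" and "length P = (l + 1) div 2" "length R = l div 2"
        by (auto simp: SL_def)
      then have "evs (inter P R) = P \<and> ods (inter P R) = R"
        by (intro evs_ods_inter) auto
      then show "(\<lambda>p. (evs (ofD p), ods (ofD p))) ((\<lambda>(P,R). toD (inter P R)) PR) = PR"
        by (simp add: PReq ofD_toD)
    qed
    show "(\<lambda>p. (evs (ofD p), ods (ofD p))) ` Dl l n \<subseteq> ?A"
    proof (rule image_subsetI)
      fix p assume "p \<in> Dl l n"
      then have p: "is_distinct_partition p" "length p = l" "odd_pos_sum p = n" by (auto simp: Dl_def)
      then have "n = sum_list (ofD p) + cc l" "dec2 (ofD p)"
        using toD_ofD[of p] opsum_toD[of "ofD p"] by (auto simp: odd_pos_sum_opsum)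
      then show "(evs (ofD p), ods (ofD p)) \<in> ?A"
        using p sum_evs_ods[of "ofD p"] len_evs_ods[of "ofD p"] dec2_iff[of "ofD p"]
        by (auto simp: SL_def)
    qed
    show "(\<lambda>(P,R). toD (inter P R)) ` ?A \<subseteq> Dl l n"
    proof (rule image_subsetI)
      fix PR assume "PR \<in> ?A"
      then obtain P R where PReq: "PR = (P,R)" and "(P,R) \<in> ?A" by (cases PR) auto
      then have PR: "length P = (l+1) div 2" "length R = l div 2" "sorted_wrt (\<ge>) P" "sorted_wrt (\<ge>) R"
        "sum_list P + sum_list R = n - cc l" by (auto simp: SL_def)
      define V where "V = inter P R"
      have eo: "evs V = P \<and> ods V = R" unfolding V_def by (rule evs_ods_inter) (use PR in auto)
      have h1: "(length V + 1) div 2 = (l+1) div 2" and h2: "length V div 2 = l div 2"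
        using len_evs_ods[of V] eo PR by auto
      have lV: "length V = l" using h1 h2 by presburger
      have "dec2 V" using dec2_iff[of V] eo PR by simp
      moreover have "sum_list V = n - cc l" using sum_evs_ods[of V] eo PR by simp
      ultimately show "(\<lambda>(P,R). toD (inter P R)) PR \<in> Dl l n"
        using toD_distinct[of V] opsum_toD[of V] lV True
        by (simp add: Dl_def V_def odd_pos_sum_opsum PReq)
    qed
  qed
  then have "card (Dl l n) = card ?A" by (rule bij_betw_same_card)
  then show ?thesis using True pairs_fps[of "(l + 1) div 2" "l div 2" "n - cc l"]
    by (simp add: fps_X_power_mult_nth mult.assoc)
qed



lemma len_le_sum: "\<forall>x\<in>set xs. 1 \<le> x \<Longrightarrow> length xs \<le> sum_list (xs::nat list)"
  by (induct xs) auto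

lemma sum_minus1: "\<forall>x\<in>set xs. 1 \<le> x \<Longrightarrow> sum_list (map (\<lambda>x. x - 1) xs) + length xs = sum_list (xs::nat list)"
  by (induct xs) auto

lemma notin0: "0 \<notin> set xs \<Longrightarrow> \<forall>x\<in>set xs. 1 \<le> (x::nat)"
  by (induct xs) auto

lemma sum_Suc: "sum_list (map Suc xs) = sum_list xs + length xs"
  by (induct xs) auto

lemma sorted_butlast_last:
  assumes "sorted_wrt (\<ge>) xs" "xs \<noteq> []" "y \<in> set xs"
  shows "last xs \<le> (y::nat)"
proof -
  have "xs = butlast xs @ [last xs]" using assms(2) by simp
  then have "sorted_wrt (\<ge>) (butlast xs @ [last xs])" using assms(1) by simp
  then have "\<forall>z\<in>set (butlast xs). last xs \<le> z" by (simp add: sorted_wrt_append)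
  moreover have "y \<in> set (butlast xs) \<or> y = last xs"
    using assms(2,3) by (metis \<open>xs = butlast xs @ [last xs]\<close> rotate1.simps(2) set_ConsD set_rotate1)
  ultimately show ?thesis by auto
qed

lemma cSL_rec:
  "cSL (Suc N) w = cSL N w + (if Suc N \<le> w then cSL (Suc N) (w - Suc N) else 0)"
proof -
  define S where "S = {xs\<in>SL (Suc N). sum_list xs = w}"
  define S0 where "S0 = {xs\<in>S. 0 \<in> set xs}"
  define S1 where "S1 = {xs\<in>S. 0 \<notin> set xs}"
  have fS: "finite S" unfolding S_def by (rule finite_SL_sum)
  have "S = S0 \<union> S1" "S0 \<inter> S1 = {}" unfolding S0_def S1_def by auto
  then have cS: "card S = card S0 + card S1"
    using fS by (metis card_Un_disjoint finite_Un)
  have "bij_betw butlast S0 {xs\<in>SL N. sum_list xs = w}"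
  proof (rule bij_betw_byWitness[where f'="\<lambda>ys. ys @ [0]"])
    { fix xs assume "xs \<in> S0"
      then have xs: "length xs = Suc N" "sorted_wrt (\<ge>) xs" "sum_list xs = w" "0 \<in> set xs"
        by (auto simp: S0_def S_def SL_def)
      then have ne: "xs \<noteq> []" by auto
      have "last xs = 0" using sorted_butlast_last[OF xs(2) ne xs(4)] by simp
      then have "butlast xs @ [0] = xs" using ne by (metis append_butlast_last_id)
    } note key = this
    show "\<forall>a\<in>S0. butlast a @ [0] = a" using key by blast
    show "\<forall>a'\<in>{xs \<in> SL N. psize xs = w}. butlast (a' @ [0]) = a'" by simp
    show "butlast ` S0 \<subseteq> {xs \<in> SL N. psize xs = w}"
    proof (rule image_subsetI)
      fix xs assume a: "xs \<in> S0"
      then have e: "butlast xs @ [0] = xs" using key by blast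
      have xs: "sorted_wrt (\<ge>) xs" "length xs = Suc N" "sum_list xs = w"
        using a by (auto simp: S0_def S_def SL_def)
      have "sorted_wrt (\<ge>) (butlast xs @ [0])" "sum_list (butlast xs @ [0]) = w"
        unfolding e using xs by auto
      moreover have "length xs = Suc N" using xs by simp
      ultimately show "butlast xs \<in> {xs \<in> SL N. psize xs = w}"
        by (auto simp: SL_def sorted_wrt_append)
    qed
    show "(\<lambda>ys. ys @ [0]) ` {xs \<in> SL N. psize xs = w} \<subseteq> S0"
      by (auto simp: S0_def S_def SL_def sorted_wrt_append)
  qed
  then have c0: "card S0 = cSL N w" unfolding cSL_def by (rule bij_betw_same_card)
  have c1: "card S1 = (if Suc N \<le> w then cSL (Suc N) (w - Suc N) else 0)"
  proof (cases "Suc N \<le> w")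
    case False
    have "S1 = {}"
    proof -
      { fix xs assume "xs \<in> S1"
        then have "length xs = Suc N" "sum_list xs = w" "0 \<notin> set xs"
          by (auto simp: S1_def S_def SL_def)
        then have "length xs = Suc N" "sum_list xs = w" "\<forall>x\<in>set xs. 1 \<le> x"
          using notin0 by auto
        then have False using len_le_sum[of xs] False by simp }
      then show ?thesis by blast
    qed
    then show ?thesis using False by simp
  next
    case True
    have "bij_betw (map (\<lambda>x. x - 1)) S1 {xs\<in>SL (Suc N). sum_list xs = w - Suc N}"
    proof (rule bij_betw_byWitness[where f'="map Suc"])
      show "\<forall>a\<in>S1. map Suc (map (\<lambda>x. x - 1) a) = a"
      proof
        fix a assume "a \<in> S1"
        then have "0 \<notin> set a" by (simp add: S1_def)
        then show "map Suc (map (\<lambda>x. x - 1) a) = a" by (induct a) auto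
      qed
      show "\<forall>a'\<in>{xs \<in> SL (Suc N). psize xs = w - Suc N}. map (\<lambda>x. x - 1) (map Suc a') = a'"
        by (simp add: map_idI)
      show "map (\<lambda>x. x - 1) ` S1 \<subseteq> {xs \<in> SL (Suc N). psize xs = w - Suc N}"
      proof (rule image_subsetI)
        fix xs assume "xs \<in> S1"
        then have xs0: "length xs = Suc N" "sorted_wrt (\<ge>) xs" "sum_list xs = w" "0 \<notin> set xs"
          by (auto simp: S1_def S_def SL_def)
        then have xs: "length xs = Suc N" "sorted_wrt (\<ge>) xs" "sum_list xs = w" "\<forall>x\<in>set xs. 1 \<le> x"
          using notin0 by auto
        have "sorted_wrt (\<ge>) (map (\<lambda>x. x - 1) xs)"
          using xs(2) by (simp add: sorted_wrt_map) (metis (mono_tags, lifting) diff_le_mono sorted_wrt_mono_rel)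
        then show "map (\<lambda>x. x - 1) xs \<in> {xs \<in> SL (Suc N). psize xs = w - Suc N}"
          using sum_minus1[OF xs(4)] xs by (auto simp: SL_def)
      qed
      show "map Suc ` {xs \<in> SL (Suc N). psize xs = w - Suc N} \<subseteq> S1"
        using True by (auto simp: S1_def S_def SL_def sum_Suc sorted_wrt_map)
    qed
    then show ?thesis using True unfolding cSL_def by (simp add: bij_betw_same_card)
  qed
  show ?thesis using cS c0 c1 unfolding S_def cSL_def by simp
qed



definition PBs :: "nat \<Rightarrow> nat \<Rightarrow> nat list set" where
  "PBs a k = {xs. sorted_wrt (\<ge>) xs \<and> (\<forall>x\<in>set xs. a \<le> x \<and> x \<le> k)}"

definition cPB :: "nat \<Rightarrow> nat \<Rightarrow> nat \<Rightarrow> nat" where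
  "cPB a k w = card {xs\<in>PBs a k. sum_list xs = w}"

lemma finite_PB_sum: assumes "1 \<le> a" shows "finite {xs\<in>PBs a k. sum_list xs = w}"
proof -
  have "{xs\<in>PBs a k. sum_list xs = w} \<subseteq> {xs. set xs \<subseteq> {..w} \<and> length xs \<le> w}"
    using assms by (auto simp: PBs_def member_le_sum_list intro!: len_le_sum)
  then show ?thesis by (rule finite_subset) (rule finite_lists_length_le, simp)
qed

lemma cPB_rec:
  "cPB 1 (Suc N) w = cPB 1 N w + (if Suc N \<le> w then cPB 1 (Suc N) (w - Suc N) else 0)"
proof -
  define S where "S = {xs\<in>PBs 1 (Suc N). sum_list xs = w}"
  define S0 where "S0 = {xs\<in>S. Suc N \<in> set xs}"
  define S1 where "S1 = {xs\<in>S. Suc N \<notin> set xs}"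
  have fS: "finite S" unfolding S_def by (rule finite_PB_sum) simp
  have "S = S0 \<union> S1" "S0 \<inter> S1 = {}" unfolding S0_def S1_def by auto
  then have cS: "card S = card S0 + card S1"
    using fS by (metis card_Un_disjoint finite_Un)
  have "\<And>xs. ((\<forall>x\<in>set xs. 1 \<le> x \<and> x \<le> Suc N) \<and> Suc N \<notin> set xs) \<longleftrightarrow> (\<forall>x\<in>set xs. 1 \<le> x \<and> x \<le> N)"
    by (auto simp: le_Suc_eq)
  then have "S1 = {xs\<in>PBs 1 N. sum_list xs = w}"
    unfolding S1_def S_def PBs_def by blast
  then have c1: "card S1 = cPB 1 N w" by (simp add: cPB_def)
  { fix xs assume "xs \<in> S0"
    then have xs: "sorted_wrt (\<ge>) xs" "Suc N \<in> set xs" "\<forall>x\<in>set xs. x \<le> Suc N"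
      by (auto simp: S0_def S_def PBs_def)
    then obtain y ys where e: "xs = y # ys" by (cases xs) auto
    then have "y = Suc N" using xs by auto
    then have "Suc N # tl xs = xs" using e by simp
  } note key = this
  have c0: "card S0 = (if Suc N \<le> w then cPB 1 (Suc N) (w - Suc N) else 0)"
  proof (cases "Suc N \<le> w")
    case False
    have "S0 = {}"
    proof -
      { fix xs assume "xs \<in> S0"
        then have "Suc N \<in> set xs" "sum_list xs = w" by (auto simp: S0_def S_def)
        then have False using member_le_sum_list[of "Suc N" xs] False by simp }
      then show ?thesis by blast
    qed
    then show ?thesis using False by simp
  next
    case True
    have "bij_betw tl S0 {xs\<in>PBs 1 (Suc N). sum_list xs = w - Suc N}"
    proof (rule bij_betw_byWitness[where f'="\<lambda>ys. Suc N # ys"])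
      show "\<forall>a\<in>S0. Suc N # tl a = a" using key by blast
      show "\<forall>a'\<in>{xs \<in> PBs 1 (Suc N). psize xs = w - Suc N}. tl (Suc N # a') = a'" by simp
      show "tl ` S0 \<subseteq> {xs \<in> PBs 1 (Suc N). psize xs = w - Suc N}"
      proof (rule image_subsetI)
        fix xs assume a: "xs \<in> S0"
        then have e: "Suc N # tl xs = xs" using key by blast
        have "xs \<in> PBs 1 (Suc N)" "sum_list xs = w" using a by (auto simp: S0_def S_def)
        then have "Suc N # tl xs \<in> PBs 1 (Suc N)" "sum_list (Suc N # tl xs) = w" unfolding e by auto
        then show "tl xs \<in> {xs \<in> PBs 1 (Suc N). psize xs = w - Suc N}"
          by (auto simp: PBs_def)
      qed
      show "(\<lambda>ys. Suc N # ys) ` {xs \<in> PBs 1 (Suc N). psize xs = w - Suc N} \<subseteq> S0"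
        using True by (auto simp: S0_def S_def PBs_def)
    qed
    then show ?thesis using True unfolding cPB_def by (simp add: bij_betw_same_card)
  qed
  show ?thesis using cS c0 c1 unfolding S_def cPB_def by simp
qed

lemma cPB2_rec:
  assumes "1 \<le> k"
  shows "cPB 1 k w = cPB 2 k w + (if 1 \<le> w then cPB 1 k (w - 1) else 0)"
proof -
  define S where "S = {xs\<in>PBs 1 k. sum_list xs = w}"
  define S0 where "S0 = {xs\<in>S. 1 \<in> set xs}"
  define S1 where "S1 = {xs\<in>S. 1 \<notin> set xs}"
  have fS: "finite S" unfolding S_def by (rule finite_PB_sum) simp
  have "S = S0 \<union> S1" "S0 \<inter> S1 = {}" unfolding S0_def S1_def by auto
  then have cS: "card S = card S0 + card S1"
    using fS by (metis card_Un_disjoint finite_Un)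
  have "S1 = {xs\<in>PBs 2 k. sum_list xs = w}"
  proof -
    have aux: "\<And>x::nat. (1 \<le> x \<and> x \<noteq> 1) \<longleftrightarrow> 2 \<le> x" by arith
    have "\<And>xs. ((\<forall>x\<in>set xs. 1 \<le> x \<and> x \<le> k) \<and> 1 \<notin> set xs) \<longleftrightarrow> (\<forall>x\<in>set xs. 2 \<le> x \<and> x \<le> k)"
      by (auto simp: aux[symmetric])
    then show ?thesis unfolding S1_def S_def PBs_def by blast
  qed
  then have c1: "card S1 = cPB 2 k w" by (simp add: cPB_def)
  { fix xs assume "xs \<in> S0"
    then have xs: "sorted_wrt (\<ge>) xs" "1 \<in> set xs" "\<forall>x\<in>set xs. 1 \<le> x"
      by (auto simp: S0_def S_def PBs_def)
    then have ne: "xs \<noteq> []" by auto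
    have "last xs \<le> 1" using sorted_butlast_last[OF xs(1) ne xs(2)] .
    moreover have "1 \<le> last xs" using xs(3) ne by simp
    ultimately have "last xs = 1" by (rule le_antisym)
    then have "butlast xs @ [1] = xs" using ne append_butlast_last_id[of xs] by simp
  } note key = this
  have c0: "card S0 = (if 1 \<le> w then cPB 1 k (w - 1) else 0)"
  proof (cases "1 \<le> w")
    case False
    have "S0 = {}"
    proof -
      { fix xs assume "xs \<in> S0"
        then have "1 \<in> set xs" "sum_list xs = w" by (auto simp: S0_def S_def)
        then have False using member_le_sum_list[of "1" xs] False by simp }
      then show ?thesis by blast
    qed
    then show ?thesis using False by simp
  next
    case True
    have "bij_betw butlast S0 {xs\<in>PBs 1 k. sum_list xs = w - 1}"
    proof (rule bij_betw_byWitness[where f'="\<lambda>ys. ys @ [1]"])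
      show "\<forall>a\<in>S0. butlast a @ [1] = a" using key by blast
      show "\<forall>a'\<in>{xs \<in> PBs 1 k. psize xs = w - 1}. butlast (a' @ [1]) = a'" by simp
      show "butlast ` S0 \<subseteq> {xs \<in> PBs 1 k. psize xs = w - 1}"
      proof (rule image_subsetI)
        fix xs assume a: "xs \<in> S0"
        then have e: "butlast xs @ [1] = xs" using key by blast
        have "xs \<in> PBs 1 k" "sum_list xs = w" using a by (auto simp: S0_def S_def)
        then have "butlast xs @ [1] \<in> PBs 1 k" "sum_list (butlast xs @ [1]) = w" unfolding e by auto
        then show "butlast xs \<in> {xs \<in> PBs 1 k. psize xs = w - 1}"
          by (auto simp: PBs_def sorted_wrt_append)
      qed
      show "(\<lambda>ys. ys @ [1]) ` {xs \<in> PBs 1 k. psize xs = w - 1} \<subseteq> S0"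
        using True assms by (auto simp: S0_def S_def PBs_def sorted_wrt_append)
    qed
    then show ?thesis using True unfolding cPB_def by (simp add: bij_betw_same_card)
  qed
  show ?thesis using cS c0 c1 unfolding S_def cPB_def by simp
qed

lemma cPB_0: "cPB 1 0 w = (if w = 0 then 1 else 0)"
proof -
  have e: "PBs 1 0 = {[]}"
  proof (intro set_eqI iffI)
    fix xs assume "xs \<in> PBs 1 0" then show "xs \<in> {[]}" by (cases xs) (auto simp: PBs_def)
  qed (simp add: PBs_def)
  show ?thesis
  proof (cases "w = 0")
    case True
    then have h: "{xs\<in>PBs 1 0. sum_list xs = w} = {[]}" unfolding e by auto
    show ?thesis unfolding cPB_def h using True by simp
  next
    case False
    then have h: "{xs\<in>PBs 1 0. sum_list xs = w} = {}" unfolding e by auto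
    show ?thesis unfolding cPB_def h using False by simp
  qed
qed

lemma cSL_0: "cSL 0 w = (if w = 0 then 1 else 0)"
proof -
  have e: "SL 0 = {[]}" by (auto simp: SL_def)
  show ?thesis
  proof (cases "w = 0")
    case True
    then have h: "{xs\<in>SL 0. sum_list xs = w} = {[]}" unfolding e by auto
    show ?thesis unfolding cSL_def h using True by simp
  next
    case False
    then have h: "{xs\<in>SL 0. sum_list xs = w} = {}" unfolding e by auto
    show ?thesis unfolding cSL_def h using False by simp
  qed
qed

lemma cPB_eq_cSL: "cPB 1 N w = cSL N w"
proof (induct N arbitrary: w)
  case 0 then show ?case by (simp only: cPB_0 cSL_0)
next
  case (Suc N)
  show ?case
  proof (induct w rule: less_induct)
    case (less w)
    show ?case using cPB_rec[of N w] cSL_rec[of N w] Suc[of w] less[of "w - Suc N"]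
      by (cases "Suc N \<le> w") auto
  qed
qed

lemma W_rec: "W (Suc N) = W N + fps_X ^ Suc N * W (Suc N)"
proof (rule fps_ext)
  fix n
  show "W (Suc N) $ n = (W N + fps_X ^ Suc N * W (Suc N)) $ n"
    unfolding fps_add_nth fps_X_power_mult_nth W_def fps_nth_Abs_fps cSL_rec[of N n]
    by simp
qed

lemma W_0: "W 0 = 1"
  by (rule fps_ext) (simp add: W_def cSL_0)

definition P2 :: "nat \<Rightarrow> int fps" where "P2 k = Abs_fps (\<lambda>w. int (cPB 2 k w))"

lemma P2_eq: assumes "1 \<le> k" shows "P2 k = (1 - fps_X) * W k"
proof (rule fps_ext)
  fix w
  have "cPB 2 k w = cPB 1 k w - (if 1 \<le> w then cPB 1 k (w - 1) else 0)"
    using cPB2_rec[OF assms, of w] by simp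
  moreover have "cPB 2 k w + (if 1 \<le> w then cPB 1 k (w - 1) else 0) = cPB 1 k w"
    using cPB2_rec[OF assms, of w] by simp
  have e: "((1 - fps_X) * W k) $ w = W k $ w - (fps_X * W k) $ w"
    by (simp add: algebra_simps)
  show "P2 k $ w = ((1 - fps_X) * W k) $ w"
    unfolding e using cPB2_rec[OF assms, of w] unfolding cPB_eq_cSL P2_def W_def
    by (cases w) auto
qed



lemma sorted_split:
  assumes "sorted_wrt (\<ge>) xs" "\<And>x y. P y \<Longrightarrow> y \<le> x \<Longrightarrow> P x"
  shows "xs = filter P xs @ filter (\<lambda>x. \<not> P x) (xs::nat list)"
using assms(1) proof (induct xs)
  case Nil then show ?case by simp
next
  case (Cons x xs)
  have s: "sorted_wrt (\<ge>) xs" and le: "\<forall>y\<in>set xs. y \<le> x" using Cons.prems by auto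
  show ?case
  proof (cases "P x")
    case True then show ?thesis using Cons.hyps[OF s] by simp
  next
    case False
    have f: "filter P xs = []" using le False assms(2) by (auto simp: filter_empty_conv)
    from Cons.hyps[OF s] f have "filter (\<lambda>x. \<not> P x) xs = xs" by (metis append_Nil)
    then show ?thesis using False f by simp
  qed
qed

lemma ones_filter: assumes "is_partition p"
  shows "filter (\<lambda>x. \<not> 1 < x) p = replicate (ones p) 1"
proof -
  have "filter (\<lambda>x. \<not> 1 < x) p = filter (\<lambda>y. 1 = y) p"
    using assms by (auto simp: is_partition_def intro!: filter_cong)
  moreover have "ones p = length (filter (\<lambda>y. 1 = y) p)"
    unfolding ones_def by (metis (mono_tags, lifting) filter_cong)
  ultimately show ?thesis by (simp add: replicate_length_filter)
qed

lemma part_split_ones: assumes "is_partition p"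
  shows "p = filter (\<lambda>x. 1 < x) p @ replicate (ones p) 1"
proof -
  have "p = filter (\<lambda>x. 1 < x) p @ filter (\<lambda>x. \<not> 1 < x) p"
    by (rule sorted_split) (use assms in \<open>auto simp: is_partition_def\<close>)
  then show ?thesis using ones_filter[OF assms] by simp
qed

lemma crank_neg_iff: assumes "is_partition p"
  shows "crank p \<le> -1 \<longleftrightarrow> 1 \<in> set p \<and> length (filter (\<lambda>x. x > ones p) p) < ones p"
  by (auto simp: crank_def)

lemma crank_zero_iff: assumes "is_partition p"
  shows "crank p = 0 \<longleftrightarrow> p = [] \<or> (1 \<in> set p \<and> length (filter (\<lambda>x. x > ones p) p) = ones p)"
proof (cases "1 \<in> set p")
  case False
  show ?thesis
  proof (cases "p = []")
    case True then show ?thesis by (simp add: crank_def)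
  next
    case ne: False
    have "Max (set p) \<in> set p" using ne by simp
    then have "0 < Max (set p)" using assms by (auto simp: is_partition_def)
    then show ?thesis using False ne by (simp add: crank_def)
  qed
next
  case True then show ?thesis by (auto simp: crank_def)
qed

lemma sorted_rep[simp]: "sorted_wrt (\<ge>) (replicate n (x::nat))"
  by (induct n) auto

lemma sum_rep1[simp]: "sum_list (replicate n (Suc 0)) = n"
  by (induct n) auto

lemma sum_map_plus: "sum_list (map (\<lambda>x. x + c) xs) = sum_list xs + length xs * (c::nat)"
  by (induct xs) auto

definition mkC :: "nat \<Rightarrow> nat list \<Rightarrow> nat list \<Rightarrow> nat list" where
  "mkC d T Y = map (\<lambda>x. x + d) T @ Y @ replicate d 1"

definition SC :: "nat \<Rightarrow> (nat \<times> nat list \<times> nat list) set" where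
  "SC n = {(d, T, Y). 1 \<le> d \<and> T \<in> SL (d - 1) \<and> Y \<in> PBs 1 d \<and> d * d + sum_list T + sum_list Y = n}"

definition Cset :: "nat \<Rightarrow> nat list set" where
  "Cset n = {p. is_partition p \<and> crank p \<le> -1 \<and> psize p = n}"

lemma mkC_nth_lt: "length T = d - 1 \<Longrightarrow> i < d - 1 \<Longrightarrow> mkC d T Y ! i = T ! i + d"
  by (simp add: mkC_def nth_append)

lemma mkC_nth_d: "length T = d - 1 \<Longrightarrow> 1 \<le> d \<Longrightarrow> \<forall>x\<in>set Y. x \<le> d \<Longrightarrow> mkC d T Y ! (d - 1) \<le> d"
  by (cases Y) (auto simp: mkC_def nth_append)

lemma mkC_in:
  assumes "(d, T, Y) \<in> SC n" shows "mkC d T Y \<in> Cset n"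
proof -
  have d: "1 \<le> d" and T: "length T = d - 1" "sorted_wrt (\<ge>) T" and
    Y: "sorted_wrt (\<ge>) Y" "\<forall>x\<in>set Y. 1 \<le> x \<and> x \<le> d" and s: "d * d + sum_list T + sum_list Y = n"
    using assms by (auto simp: SC_def SL_def PBs_def)
  let ?p = "mkC d T Y"
  have sT: "sorted_wrt (\<ge>) (map (\<lambda>x. x + d) T)"
    using T(2) by (simp add: sorted_wrt_map)
  have part: "is_partition ?p"
    using sT Y d by (auto simp: is_partition_def mkC_def sorted_wrt_append)
  have "psize ?p = sum_list T + (d - 1) * d + sum_list Y + d"
    using T by (simp add: mkC_def sum_map_plus)
  also have "\<dots> = n" using s d by (cases d) (auto simp: algebra_simps)
  finally have ps: "psize ?p = n" .
  have noT1: "\<forall>x\<in>set T. x + d \<noteq> 1"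
  proof
    fix x assume "x \<in> set T"
    then have "T \<noteq> []" by auto
    then have "2 \<le> d" using T(1) d by (cases T) auto
    then show "x + d \<noteq> 1" by simp
  qed
  have ones: "ones ?p = ones Y + d"
  proof -
    have "filter (\<lambda>x. x = 1) (map (\<lambda>x. x + d) T) = []"
      using noT1 by (auto simp: filter_empty_conv)
    then show ?thesis by (simp add: ones_def mkC_def filter_replicate)
  qed
  have "filter (\<lambda>x. x > ones ?p) (Y @ replicate d 1) = []"
    using Y ones d by (auto simp: filter_empty_conv)
  then have "length (filter (\<lambda>x. x > ones ?p) ?p) \<le> length T"
    by (simp add: mkC_def)
  then have "length (filter (\<lambda>x. x > ones ?p) ?p) < ones ?p" using T ones d by simp
  moreover have "1 \<in> set ?p" using d by (simp add: mkC_def)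
  ultimately show ?thesis using part ps crank_neg_iff[OF part] by (simp add: Cset_def)
qed

lemma mkC_inj: "inj_on (\<lambda>(d, T, Y). mkC d T Y) (SC n)"
proof (rule inj_onI)
  fix x y assume ax: "x \<in> SC n" and ay: "y \<in> SC n"
    and exy: "(\<lambda>(d, T, Y). mkC d T Y) x = (\<lambda>(d, T, Y). mkC d T Y) y"
  obtain d T Y where x: "x = (d,T,Y)" by (cases x)
  obtain d' T' Y' where y: "y = (d',T',Y')" by (cases y)
  have a: "(d, T, Y) \<in> SC n" "(d', T', Y') \<in> SC n" using ax ay x y by auto
  have e: "mkC d T Y = mkC d' T' Y'" using exy x y by simp
  have d: "1 \<le> d" "length T = d - 1" "\<forall>x\<in>set Y. x \<le> d"
    using a(1) by (auto simp: SC_def SL_def PBs_def)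
  have d': "1 \<le> d'" "length T' = d' - 1" "\<forall>x\<in>set Y'. x \<le> d'"
    using a(2) by (auto simp: SC_def SL_def PBs_def)
  have dd: "d = d'"
  proof (rule ccontr)
    assume "d \<noteq> d'"
    then consider "d < d'" | "d' < d" by linarith
    then show False
    proof cases
      case 1
      have "mkC d' T' Y' ! (d - 1) = T' ! (d - 1) + d'" using 1 d d' by (intro mkC_nth_lt) auto
      moreover have "mkC d T Y ! (d - 1) \<le> d" using d by (intro mkC_nth_d) auto
      ultimately show False using e 1 by simp
    next
      case 2
      have "mkC d T Y ! (d' - 1) = T ! (d' - 1) + d" using 2 d d' by (intro mkC_nth_lt) auto
      moreover have "mkC d' T' Y' ! (d' - 1) \<le> d'" using d' by (intro mkC_nth_d) auto
      ultimately show False using e 2 by simp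
    qed
  qed
  have "map (\<lambda>x. x + d) T = map (\<lambda>x. x + d) T' \<and> Y @ replicate d 1 = Y' @ replicate d 1"
    using e d d' dd unfolding mkC_def by (intro iffD1[OF append_eq_append_conv]) auto
  moreover have "inj (\<lambda>x::nat. x + d)" by (simp add: inj_on_def)
  ultimately show "x = y" using dd x y by simp
qed



lemma mkC_size: "length T = d - 1 \<Longrightarrow> 1 \<le> d \<Longrightarrow> psize (mkC d T Y) = d * d + sum_list T + sum_list Y"
proof -
  assume a: "length T = d - 1" "1 \<le> d"
  have "psize (mkC d T Y) = sum_list T + length T * d + sum_list Y + d"
    by (simp only: mkC_def sum_list_append sum_map_plus sum_list_replicate) simp
  then show ?thesis using a by (cases d) (auto simp: algebra_simps)
qed

lemma ones_pos: "1 \<in> set p \<Longrightarrow> 1 \<le> ones p"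
  by (auto simp: ones_def filter_empty_conv Suc_le_eq length_greater_0_conv)

lemma mkC_surj:
  assumes "p \<in> Cset n" shows "\<exists>d T Y. (d, T, Y) \<in> SC n \<and> mkC d T Y = p"
proof -
  have part: "is_partition p" and ps: "psize p = n" and cr: "crank p \<le> -1"
    using assms by (auto simp: Cset_def)
  define k where "k = ones p"
  have one: "1 \<in> set p" and mu: "length (filter (\<lambda>x. x > k) p) < k"
    using cr crank_neg_iff[OF part] by (auto simp: k_def)
  have k1: "1 \<le> k" using ones_pos[OF one] by (simp add: k_def)
  have srt: "sorted_wrt (\<ge>) p" and pos: "\<forall>x\<in>set p. 0 < x" using part by (auto simp: is_partition_def)
  define H where "H = filter (\<lambda>x. 1 < x) p"
  have pH: "p = H @ replicate k 1" using part_split_ones[OF part] by (simp add: H_def k_def)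
  have lp: "length p = length H + k" using pH by (metis length_append length_replicate)
  have srtH: "sorted_wrt (\<ge>) H" using srt by (simp add: H_def sorted_wrt_filter)
  have H2: "\<forall>x\<in>set H. 1 < x" by (simp add: H_def)
  have pnthH: "\<And>i. i < length H \<Longrightarrow> p ! i = H ! i" using pH by (simp add: nth_append)
  have pnth1: "\<And>i. length H \<le> i \<Longrightarrow> i < length p \<Longrightarrow> p ! i = 1" using pH lp by (simp add: nth_append)
  have mono: "\<And>i j. i \<le> j \<Longrightarrow> j < length p \<Longrightarrow> p ! j \<le> p ! i"
  proof -
    fix i j assume "i \<le> j" "j < length p"
    then show "p ! j \<le> p ! i"
      using sorted_wrt_nth_less[OF srt, of i j] by (cases "i = j") auto
  qed
  define P where "P i \<longleftrightarrow> 1 \<le> i \<and> p ! (i - 1) \<le> i" for i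
  have Pk: "P k"
  proof (rule ccontr)
    assume "\<not> P k"
    then have gt: "p ! (k - 1) > k" using k1 by (simp add: P_def)
    have "{0..<k} \<subseteq> {i. i < length p \<and> k < p ! i}"
    proof
      fix i assume "i \<in> {0..<k}"
      then have "i \<le> k - 1" "k - 1 < length p" using lp k1 by auto
      then show "i \<in> {i. i < length p \<and> k < p ! i}" using mono[of i "k - 1"] gt by auto
    qed
    then have "card {0..<k} \<le> card {i. i < length p \<and> k < p ! i}"
      by (rule card_mono[rotated]) auto
    then have "k \<le> card {i. i < length p \<and> k < p ! i}" by simp
    then show False using mu length_filter_conv_card[of "\<lambda>x. x > k" p] by simp
  qed
  define d where "d = (LEAST i. P i)"
  have Pd: "P d" unfolding d_def by (rule LeastI[of P k, OF Pk])
  have dk: "d \<le> k" unfolding d_def by (rule Least_le[of P k, OF Pk])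
  have d1: "1 \<le> d" and pd: "p ! (d - 1) \<le> d" using Pd by (auto simp: P_def)
  have below: "\<And>j. 1 \<le> j \<Longrightarrow> j < d \<Longrightarrow> j < p ! (j - 1)"
  proof -
    fix j assume "1 \<le> j" "j < d"
    have jl: "j < (LEAST i. P i)" using \<open>j < d\<close> by (simp only: d_def)
    have "\<not> P j" by (rule not_less_Least[OF jl])
    then show "j < p ! (j - 1)" using \<open>1 \<le> j\<close> by (simp add: P_def)
  qed
  have bigT: "\<And>i. i < d - 1 \<Longrightarrow> d \<le> p ! i"
  proof -
    fix i assume i: "i < d - 1"
    then obtain e where de: "d = Suc (Suc e)" by (cases d; cases "d - 1") auto
    have "Suc e < p ! e" using below[of "Suc e"] de by simp
    moreover have "p ! e \<le> p ! i" using mono[of i e] i dk lp de by simp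
    ultimately show "d \<le> p ! i" using de by simp
  qed
  have dH: "d - 1 \<le> length H"
  proof (rule ccontr)
    assume "\<not> d - 1 \<le> length H"
    then have "length H < d - 1" by simp
    then have "p ! (length H) = 1" using pnth1[of "length H"] lp dk k1 by simp
    moreover have "d \<le> p ! (length H)" using bigT \<open>length H < d - 1\<close> by simp
    moreover have "2 \<le> d" using \<open>length H < d - 1\<close> by simp
    ultimately show False by simp
  qed
  define T where "T = map (\<lambda>x. x - d) (take (d - 1) H)"
  define Y where "Y = drop (d - 1) H @ replicate (k - d) 1"
  have takeH: "\<forall>x\<in>set (take (d - 1) H). d \<le> x"
  proof
    fix x assume "x \<in> set (take (d - 1) H)"
    then obtain i where "i < length (take (d - 1) H)" "x = take (d - 1) H ! i" by (auto simp: in_set_conv_nth)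
    then have "i < d - 1" "x = H ! i" "i < length H" by auto
    then have "x = p ! i" using pnthH by simp
    then show "d \<le> x" using bigT[OF \<open>i < d - 1\<close>] by simp
  qed
  have mapT: "map (\<lambda>x. x + d) T = take (d - 1) H"
  proof -
    have "map (\<lambda>x. x + d) T = map (\<lambda>x. x - d + d) (take (d - 1) H)" unfolding T_def map_map o_def ..
    also have "\<dots> = take (d - 1) H"
    proof (rule map_idI)
      fix x assume "x \<in> set (take (d - 1) H)"
      then have "d \<le> x" using takeH by blast
      then show "x - d + d = x" by simp
    qed
    finally show ?thesis .
  qed
  have "p = take (d - 1) H @ drop (d - 1) H @ replicate (k - d) 1 @ replicate d 1"
    using pH dk by (simp add: replicate_add[symmetric])
  then have pe: "mkC d T Y = p" by (simp add: mkC_def mapT Y_def)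
  have lT: "length T = d - 1" using dH by (simp add: T_def)
  have sT: "sorted_wrt (\<ge>) T"
    unfolding T_def sorted_wrt_map by (rule sorted_wrt_mono_rel[OF _ sorted_wrt_take[OF srtH]]) auto
  have dropH: "\<forall>x\<in>set (drop (d - 1) H). x \<le> d"
  proof
    fix x assume "x \<in> set (drop (d - 1) H)"
    then obtain i where i: "i < length H - (d - 1)" "x = H ! (d - 1 + i)" by (auto simp: in_set_conv_nth)
    then have "H ! (d - 1 + i) \<le> H ! (d - 1)"
      using sorted_wrt_nth_less[OF srtH, of "d - 1" "d - 1 + i"] by (cases i) auto
    moreover have "H ! (d - 1) = p ! (d - 1)" using pnthH i by simp
    ultimately show "x \<le> d" using pd i by simp
  qed
  have H1: "\<forall>x\<in>set (drop (d - 1) H). 1 \<le> x"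
  proof
    fix x assume "x \<in> set (drop (d - 1) H)"
    then have "x \<in> set H" by (rule in_set_dropD)
    then have "1 < x" using H2 by blast
    then show "1 \<le> x" by simp
  qed
  have sY: "sorted_wrt (\<ge>) Y"
    using sorted_wrt_drop[OF srtH, of "d - 1"] H1 by (auto simp: Y_def sorted_wrt_append)
  have bY: "\<forall>x\<in>set Y. 1 \<le> x \<and> x \<le> d"
    using dropH H1 d1 by (auto simp: Y_def)
  have "(d, T, Y) \<in> SC n"
    using d1 lT sT sY bY mkC_size[OF lT d1, of Y] ps pe by (auto simp: SC_def SL_def PBs_def)
  then show ?thesis using pe by blast
qed



lemma pairs_gen:
  fixes f :: "'a \<Rightarrow> nat" and g :: "'b \<Rightarrow> nat"
  assumes "\<And>i. finite {x\<in>A. f x = i}" "\<And>j. finite {y\<in>B. g y = j}"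
  shows "int (card {(x,y). x\<in>A \<and> y\<in>B \<and> f x + g y = w})
    = (Abs_fps (\<lambda>i. int (card {x\<in>A. f x = i})) * Abs_fps (\<lambda>j. int (card {y\<in>B. g y = j}))) $ w"
  using card_pairs[OF assms, of w] by (simp add: fps_mult_nth atLeast0AtMost)

lemma W_alt: "W N = Abs_fps (\<lambda>i. int (card {x\<in>SL N. sum_list x = i}))"
  by (simp add: W_def cSL_def)

lemma W_alt2: "W N = Abs_fps (\<lambda>i. int (card {x\<in>PBs 1 N. sum_list x = i}))"
  by (simp add: W_def cPB_eq_cSL[symmetric] cPB_def)

lemma P2_alt: "P2 N = Abs_fps (\<lambda>i. int (card {x\<in>PBs 2 N. sum_list x = i}))"
  by (simp add: P2_def cPB_def)

lemma Cset_eq_SC: "card (Cset n) = card (SC n)"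
proof -
  have "bij_betw (\<lambda>(d, T, Y). mkC d T Y) (SC n) (Cset n)"
    unfolding bij_betw_def
  proof
    show "inj_on (\<lambda>(d, T, Y). mkC d T Y) (SC n)" by (rule mkC_inj)
    show "(\<lambda>(d, T, Y). mkC d T Y) ` SC n = Cset n"
    proof
      show "(\<lambda>(d, T, Y). mkC d T Y) ` SC n \<subseteq> Cset n" using mkC_in by auto
      show "Cset n \<subseteq> (\<lambda>(d, T, Y). mkC d T Y) ` SC n"
      proof
        fix p assume "p \<in> Cset n"
        then obtain d T Y where "(d, T, Y) \<in> SC n" "mkC d T Y = p" using mkC_surj by blast
        then show "p \<in> (\<lambda>(d, T, Y). mkC d T Y) ` SC n" by force
      qed
    qed
  qed
  then show ?thesis by (simp add: bij_betw_same_card)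
qed

definition QC :: "nat \<Rightarrow> nat \<Rightarrow> (nat list \<times> nat list) set" where
  "QC n d = {(T, Y). T \<in> SL (d - 1) \<and> Y \<in> PBs 1 d \<and> d * d + sum_list T + sum_list Y = n}"

lemma QC_card: "int (card (QC n d)) = (fps_X ^ (d * d) * W (d - 1) * W d) $ n"
proof (cases "d * d \<le> n")
  case True
  have "QC n d = {(T, Y). T \<in> SL (d - 1) \<and> Y \<in> PBs 1 d \<and> sum_list T + sum_list Y = n - d * d}"
    using True by (auto simp: QC_def)
  then have "int (card (QC n d)) = (W (d - 1) * W d) $ (n - d * d)"
    unfolding W_alt[of "d - 1"] W_alt2[of d] by (simp only: pairs_gen finite_SL_sum finite_PB_sum one_le_numeral order_refl)
  then show ?thesis using True by (simp add: fps_X_power_mult_nth mult.assoc)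
next
  case False
  then have "QC n d = {}" by (auto simp: QC_def)
  then show ?thesis using False by (simp add: fps_X_power_mult_nth mult.assoc)
qed

lemma Cset_card: "int (card (Cset n)) = (\<Sum>d\<in>{1..n}. (fps_X ^ (d * d) * W (d - 1) * W d) $ n)"
proof -
  have "bij_betw (\<lambda>(d, T, Y). (d, (T, Y))) (SC n) (SIGMA d:{1..n}. QC n d)"
  proof (rule bij_betw_byWitness[where f'="\<lambda>(d, (T, Y)). (d, T, Y)"])
    show "\<forall>a\<in>SC n. (\<lambda>(d, T, Y). (d, T, Y)) ((\<lambda>(d, T, Y). (d, T, Y)) a) = a" by auto
    show "\<forall>a'\<in>SIGMA d:{1..n}. QC n d. (\<lambda>(d, T, Y). (d, T, Y)) ((\<lambda>(d, T, Y). (d, T, Y)) a') = a'" by auto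
    show "(\<lambda>(d, T, Y). (d, T, Y)) ` SC n \<subseteq> (SIGMA d:{1..n}. QC n d)"
    proof (rule image_subsetI)
      fix x assume "x \<in> SC n"
      then obtain d T Y where x: "x = (d, T, Y)" and d: "1 \<le> d" "T \<in> SL (d - 1)" "Y \<in> PBs 1 d"
        "d * d + sum_list T + sum_list Y = n" by (auto simp: SC_def)
      have "d \<le> d * d" using d(1) by simp
      then have "d \<le> n" using d(4) by linarith
      then show "(\<lambda>(d, T, Y). (d, T, Y)) x \<in> (SIGMA d:{1..n}. QC n d)" using x d by (auto simp: QC_def)
    qed
    show "(\<lambda>(d, T, Y). (d, T, Y)) ` (SIGMA d:{1..n}. QC n d) \<subseteq> SC n"
      by (auto simp: QC_def SC_def)
  qed
  then have "card (SC n) = card (SIGMA d:{1..n}. QC n d)" by (rule bij_betw_same_card)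
  also have "\<dots> = (\<Sum>d\<in>{1..n}. card (QC n d))"
  proof (rule card_SigmaI)
    show "finite {1..n}" by simp
    show "\<forall>a\<in>{1..n}. finite (QC n a)"
    proof
      fix d assume "d \<in> {1..n}"
      have "QC n d \<subseteq> {T\<in>SL (d - 1). sum_list T \<le> n} \<times> {Y\<in>PBs 1 d. sum_list Y \<le> n}"
        by (auto simp: QC_def)
      moreover have "finite {T\<in>SL (d - 1). sum_list T \<le> n}"
      proof -
        have "{T\<in>SL (d - 1). sum_list T \<le> n} = (\<Union>i\<le>n. {T\<in>SL (d - 1). sum_list T = i})" by auto
        then show ?thesis using finite_SL_sum by simp
      qed
      moreover have "finite {Y\<in>PBs 1 d. sum_list Y \<le> n}"
      proof -
        have "{Y\<in>PBs 1 d. sum_list Y \<le> n} = (\<Union>i\<le>n. {Y\<in>PBs 1 d. sum_list Y = i})" by auto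
        then show ?thesis using finite_PB_sum[of 1] by simp
      qed
      ultimately show "finite (QC n d)" by (meson finite_SigmaI finite_subset)
    qed
  qed
  finally have "card (SC n) = (\<Sum>d\<in>{1..n}. card (QC n d))" .
  then have "int (card (SC n)) = (\<Sum>d\<in>{1..n}. int (card (QC n d)))" by simp
  then show ?thesis using Cset_eq_SC QC_card by simp
qed



definition mkZ :: "nat \<Rightarrow> nat list \<Rightarrow> nat list \<Rightarrow> nat list" where
  "mkZ k T B = map (\<lambda>x. x + (k + 1)) T @ B @ replicate k 1"

definition SZ :: "nat \<Rightarrow> (nat \<times> nat list \<times> nat list) set" where
  "SZ n = {(k, T, B). 1 \<le> k \<and> T \<in> SL k \<and> B \<in> PBs 2 k \<and> k * k + 2 * k + sum_list T + sum_list B = n}"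

definition Zset :: "nat \<Rightarrow> nat list set" where
  "Zset n = {p. is_partition p \<and> crank p = 0 \<and> psize p = n}"

lemma mkZ_size: "length T = k \<Longrightarrow> psize (mkZ k T B) = k * k + 2 * k + sum_list T + sum_list B"
proof -
  assume a: "length T = k"
  have "psize (mkZ k T B) = sum_list T + length T * (k + 1) + sum_list B + k"
    by (simp only: mkZ_def sum_list_append sum_map_plus sum_list_replicate) simp
  then show ?thesis using a by (simp add: algebra_simps)
qed

lemma ones_mkZ:
  assumes "\<forall>x\<in>set B. 2 \<le> x" "1 \<le> k" shows "ones (mkZ k T B) = k"
proof -
  have "filter (\<lambda>x. x = 1) (map (\<lambda>x. x + (k + 1)) T) = []" using assms(2) by (auto simp: filter_empty_conv)
  moreover have "filter (\<lambda>x. x = 1) B = []" using assms by (auto simp: filter_empty_conv)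
  ultimately show ?thesis by (simp add: ones_def mkZ_def filter_replicate)
qed

lemma mkZ_in:
  assumes "(k, T, B) \<in> SZ n" shows "mkZ k T B \<in> Zset n"
proof -
  have k: "1 \<le> k" and T: "length T = k" "sorted_wrt (\<ge>) T" and
    B: "sorted_wrt (\<ge>) B" "\<forall>x\<in>set B. 2 \<le> x \<and> x \<le> k" and s: "k * k + 2 * k + sum_list T + sum_list B = n"
    using assms by (auto simp: SZ_def SL_def PBs_def)
  let ?p = "mkZ k T B"
  have sT: "sorted_wrt (\<ge>) (map (\<lambda>x. x + (k + 1)) T)"
    using T(2) by (simp add: sorted_wrt_map)
  have part: "is_partition ?p"
    using sT B k by (auto simp: is_partition_def mkZ_def sorted_wrt_append)
  have ps: "psize ?p = n" using mkZ_size[OF T(1)] s by simp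
  have ones: "ones ?p = k" using ones_mkZ B k by auto
  have "filter (\<lambda>x. x > k) (B @ replicate k 1) = []"
    using B k by (auto simp: filter_empty_conv)
  moreover have "filter (\<lambda>x. x > k) (map (\<lambda>x. x + (k + 1)) T) = map (\<lambda>x. x + (k + 1)) T"
    by (auto intro: filter_True)
  ultimately have "length (filter (\<lambda>x. x > ones ?p) ?p) = k" using T ones by (simp add: mkZ_def)
  moreover have "1 \<in> set ?p" using k by (simp add: mkZ_def)
  ultimately show ?thesis using part ps crank_zero_iff[OF part] ones by (simp add: Zset_def)
qed

lemma mkZ_inj: "inj_on (\<lambda>(k, T, B). mkZ k T B) (SZ n)"
proof (rule inj_onI)
  fix x y assume ax: "x \<in> SZ n" and ay: "y \<in> SZ n"
    and exy: "(\<lambda>(k, T, B). mkZ k T B) x = (\<lambda>(k, T, B). mkZ k T B) y"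
  obtain k T B where x: "x = (k,T,B)" by (cases x)
  obtain k' T' B' where y: "y = (k',T',B')" by (cases y)
  have a: "(k, T, B) \<in> SZ n" "(k', T', B') \<in> SZ n" using ax ay x y by auto
  have e: "mkZ k T B = mkZ k' T' B'" using exy x y by simp
  have B: "\<forall>x\<in>set B. 2 \<le> x" "length T = k" "1 \<le> k" using a(1) by (auto simp: SZ_def PBs_def SL_def)
  have B': "\<forall>x\<in>set B'. 2 \<le> x" "length T' = k'" "1 \<le> k'" using a(2) by (auto simp: SZ_def PBs_def SL_def)
  have kk: "k = k'" using ones_mkZ[OF B(1) B(3), of T] ones_mkZ[OF B'(1) B'(3), of T'] e by simp
  have "map (\<lambda>x. x + (k + 1)) T = map (\<lambda>x. x + (k + 1)) T' \<and> B @ replicate k 1 = B' @ replicate k 1"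
    using e B B' kk unfolding mkZ_def by (intro iffD1[OF append_eq_append_conv]) auto
  moreover have "inj (\<lambda>x::nat. x + (k + 1))" by (simp add: inj_on_def)
  ultimately show "x = y" using kk x y by simp
qed

lemma mkZ_surj:
  assumes "p \<in> Zset n" "p \<noteq> []" shows "\<exists>k T B. (k, T, B) \<in> SZ n \<and> mkZ k T B = p"
proof -
  have part: "is_partition p" and ps: "psize p = n" and cr: "crank p = 0"
    using assms by (auto simp: Zset_def)
  define k where "k = ones p"
  have one: "1 \<in> set p" and mu: "length (filter (\<lambda>x. x > k) p) = k"
    using cr crank_zero_iff[OF part] assms(2) by (auto simp: k_def)
  have k1: "1 \<le> k" using ones_pos[OF one] by (simp add: k_def)
  have srt: "sorted_wrt (\<ge>) p" and pos: "\<forall>x\<in>set p. 0 < x" using part by (auto simp: is_partition_def)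
  define G where "G = filter (\<lambda>x. k < x) p"
  define L where "L = filter (\<lambda>x. \<not> k < x) p"
  have pGL: "p = G @ L" unfolding G_def L_def by (rule sorted_split[OF srt]) simp
  have partL: "is_partition L" using part by (auto simp: L_def is_partition_def sorted_wrt_filter)
  have "ones L = k"
  proof -
    have "filter (\<lambda>x. x = 1) L = filter (\<lambda>x. x = 1) p"
      unfolding L_def using k1 by (auto intro!: filter_cong)
    then show ?thesis by (simp add: ones_def k_def)
  qed
  define B where "B = filter (\<lambda>x. 1 < x) L"
  have LB: "L = B @ replicate k 1" using part_split_ones[OF partL] \<open>ones L = k\<close> by (simp add: B_def)
  define T where "T = map (\<lambda>x. x - (k + 1)) G"
  have Gk: "\<forall>x\<in>set G. k + 1 \<le> x" by (auto simp: G_def)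
  have mapT: "map (\<lambda>x. x + (k + 1)) T = G"
  proof -
    have "map (\<lambda>x. x + (k + 1)) T = map (\<lambda>x. x - (k + 1) + (k + 1)) G" unfolding T_def map_map o_def ..
    also have "\<dots> = G"
    proof (rule map_idI)
      fix x assume "x \<in> set G"
      then have "k + 1 \<le> x" using Gk by blast
      then show "x - (k + 1) + (k + 1) = x" by simp
    qed
    finally show ?thesis .
  qed
  have pe: "mkZ k T B = p" using pGL LB mapT by (simp add: mkZ_def)
  have lT: "length T = k" using mu by (simp add: T_def G_def)
  have srtG: "sorted_wrt (\<ge>) G" using srt by (simp add: G_def sorted_wrt_filter)
  have sT: "sorted_wrt (\<ge>) T"
    unfolding T_def sorted_wrt_map by (rule sorted_wrt_mono_rel[OF _ srtG]) auto
  have sB: "sorted_wrt (\<ge>) B" using partL by (simp add: B_def is_partition_def sorted_wrt_filter)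
  have bB: "\<forall>x\<in>set B. 2 \<le> x \<and> x \<le> k" by (auto simp: B_def L_def)
  have "(k, T, B) \<in> SZ n"
    using k1 lT sT sB bB mkZ_size[OF lT, of B] ps pe by (auto simp: SZ_def SL_def PBs_def)
  then show ?thesis using pe by blast
qed



lemma Zset_split: "Zset n = (if n = 0 then {[]} else {}) \<union> (\<lambda>(k, T, B). mkZ k T B) ` SZ n"
proof
  show "Zset n \<subseteq> (if n = 0 then {[]} else {}) \<union> (\<lambda>(k, T, B). mkZ k T B) ` SZ n"
  proof
    fix p assume p: "p \<in> Zset n"
    show "p \<in> (if n = 0 then {[]} else {}) \<union> (\<lambda>(k, T, B). mkZ k T B) ` SZ n"
    proof (cases "p = []")
      case True then show ?thesis using p by (simp add: Zset_def)
    next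
      case False
      then obtain k T B where "(k, T, B) \<in> SZ n" "mkZ k T B = p" using mkZ_surj[OF p] by blast
      then show ?thesis by force
    qed
  qed
  show "(if n = 0 then {[]} else {}) \<union> (\<lambda>(k, T, B). mkZ k T B) ` SZ n \<subseteq> Zset n"
  proof
    fix p assume "p \<in> (if n = 0 then {[]} else {}) \<union> (\<lambda>(k, T, B). mkZ k T B) ` SZ n"
    then consider "n = 0" "p = []" | x where "x \<in> SZ n" "p = (\<lambda>(k, T, B). mkZ k T B) x"
      by (cases "n = 0") auto
    then show "p \<in> Zset n"
    proof cases
      case 1 then show ?thesis by (simp add: Zset_def is_partition_def crank_def)
    next
      case 2
      obtain k T B where "x = (k, T, B)" by (cases x)
      then show ?thesis using 2 mkZ_in by simp
    qed
  qed
qed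


definition QZ :: "nat \<Rightarrow> nat \<Rightarrow> (nat list \<times> nat list) set" where
  "QZ n k = {(T, B). T \<in> SL k \<and> B \<in> PBs 2 k \<and> k * k + 2 * k + sum_list T + sum_list B = n}"

lemma QZ_card: "int (card (QZ n k)) = (fps_X ^ (k * k + 2 * k) * W k * P2 k) $ n"
proof (cases "k * k + 2 * k \<le> n")
  case True
  have "QZ n k = {(T, B). T \<in> SL k \<and> B \<in> PBs 2 k \<and> sum_list T + sum_list B = n - (k * k + 2 * k)}"
    using True by (auto simp: QZ_def)
  then have "int (card (QZ n k)) = (W k * P2 k) $ (n - (k * k + 2 * k))"
    unfolding W_alt[of k] P2_alt[of k]
    by (simp only: pairs_gen finite_SL_sum finite_PB_sum one_le_numeral)
  then show ?thesis using True by (simp add: fps_X_power_mult_nth mult.assoc)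
next
  case False
  then have "QZ n k = {}" by (auto simp: QZ_def)
  then show ?thesis using False by (simp add: fps_X_power_mult_nth mult.assoc)
qed

lemma finite_QZ: "finite (QZ n k)"
proof -
  have "QZ n k \<subseteq> {T\<in>SL k. sum_list T \<le> n} \<times> {Y\<in>PBs 2 k. sum_list Y \<le> n}"
    by (auto simp: QZ_def)
  moreover have "finite {T\<in>SL k. sum_list T \<le> n}"
  proof -
    have "{T\<in>SL k. sum_list T \<le> n} = (\<Union>i\<le>n. {T\<in>SL k. sum_list T = i})" by auto
    then show ?thesis using finite_SL_sum by simp
  qed
  moreover have "finite {Y\<in>PBs 2 k. sum_list Y \<le> n}"
  proof -
    have "{Y\<in>PBs 2 k. sum_list Y \<le> n} = (\<Union>i\<le>n. {Y\<in>PBs 2 k. sum_list Y = i})" by auto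
    then show ?thesis using finite_PB_sum[of 2] by simp
  qed
  ultimately show ?thesis by (meson finite_SigmaI finite_subset)
qed

lemma SZ_card: "int (card (SZ n)) = (\<Sum>k\<in>{1..n}. (fps_X ^ (k * k + 2 * k) * W k * P2 k) $ n)"
proof -
  have "bij_betw (\<lambda>(d, T, Y). (d, (T, Y))) (SZ n) (SIGMA k:{1..n}. QZ n k)"
  proof (rule bij_betw_byWitness[where f'="\<lambda>(d, (T, Y)). (d, T, Y)"])
    show "\<forall>a\<in>SZ n. (\<lambda>(d, T, Y). (d, T, Y)) ((\<lambda>(d, T, Y). (d, T, Y)) a) = a" by auto
    show "\<forall>a'\<in>SIGMA d:{1..n}. QZ n d. (\<lambda>(d, T, Y). (d, T, Y)) ((\<lambda>(d, T, Y). (d, T, Y)) a') = a'" by auto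
    show "(\<lambda>(d, T, Y). (d, T, Y)) ` SZ n \<subseteq> (SIGMA d:{1..n}. QZ n d)"
    proof (rule image_subsetI)
      fix x assume "x \<in> SZ n"
      then obtain d T Y where x: "x = (d, T, Y)" and d: "1 \<le> d" "T \<in> SL d" "Y \<in> PBs 2 d"
        "d * d + 2 * d + sum_list T + sum_list Y = n" by (auto simp: SZ_def)
      have "d \<le> n" using d(4) by linarith
      then show "(\<lambda>(d, T, Y). (d, T, Y)) x \<in> (SIGMA d:{1..n}. QZ n d)" using x d by (auto simp: QZ_def)
    qed
    show "(\<lambda>(d, T, Y). (d, T, Y)) ` (SIGMA d:{1..n}. QZ n d) \<subseteq> SZ n"
      by (auto simp: QZ_def SZ_def)
  qed
  then have "card (SZ n) = card (SIGMA d:{1..n}. QZ n d)" by (rule bij_betw_same_card)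
  also have "\<dots> = (\<Sum>d\<in>{1..n}. card (QZ n d))"
    by (rule card_SigmaI) (auto simp: finite_QZ)
  finally have "int (card (SZ n)) = (\<Sum>d\<in>{1..n}. int (card (QZ n d)))" by simp
  then show ?thesis using QZ_card by simp
qed

lemma finite_SZ: "finite (SZ n)"
proof -
  have "SZ n = (\<lambda>(d, (T, Y)). (d, T, Y)) ` (SIGMA k:{1..n}. QZ n k)"
  proof
    show "SZ n \<subseteq> (\<lambda>(d, (T, Y)). (d, T, Y)) ` (SIGMA k:{1..n}. QZ n k)"
    proof
      fix x assume "x \<in> SZ n"
      then obtain d T Y where x: "x = (d, T, Y)" and d: "1 \<le> d" "T \<in> SL d" "Y \<in> PBs 2 d"
        "d * d + 2 * d + sum_list T + sum_list Y = n" by (auto simp: SZ_def)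
      have "d \<le> n" using d(4) by linarith
      then have "(d, (T, Y)) \<in> (SIGMA k:{1..n}. QZ n k)" using d by (auto simp: QZ_def)
      then show "x \<in> (\<lambda>(d, (T, Y)). (d, T, Y)) ` (SIGMA k:{1..n}. QZ n k)" using x by force
    qed
    show "(\<lambda>(d, (T, Y)). (d, T, Y)) ` (SIGMA k:{1..n}. QZ n k) \<subseteq> SZ n"
      by (auto simp: QZ_def SZ_def)
  qed
  then show ?thesis by (simp add: finite_QZ)
qed

lemma Zset_card: "int (card (Zset n)) = (if n = 0 then 1 else 0) + (\<Sum>k\<in>{1..n}. (fps_X ^ (k * k + 2 * k) * W k * P2 k) $ n)"
proof -
  define IM where "IM = (\<lambda>(k, T, B). mkZ k T B) ` SZ n"
  define E0 where "E0 = (if n = 0 then {([]::nat list)} else {})"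
  have e: "Zset n = E0 \<union> IM" using Zset_split unfolding IM_def E0_def by simp
  have disj: "E0 \<inter> IM = {}"
    by (auto simp: SZ_def mkZ_def IM_def E0_def)
  have fIM: "finite IM" unfolding IM_def using finite_SZ by simp
  have fE: "finite E0" by (simp add: E0_def)
  have "card (Zset n) = card E0 + card IM"
    unfolding e by (rule card_Un_disjoint[OF fE fIM disj])
  also have "card IM = card (SZ n)"
    unfolding IM_def by (rule card_image[OF mkZ_inj])
  also have "card E0 = (if n = 0 then 1 else 0)" by (simp add: E0_def)
  finally show ?thesis using SZ_card by simp
qed



lemma dp_opsum: "is_distinct_partition p \<Longrightarrow> odd_pos_sum p = sum_list (ofD p) + cc (length p)"
  using toD_ofD[of p] opsum_toD[of "ofD p"] by (simp add: odd_pos_sum_opsum)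

lemma cc_ge: "l div 2 \<le> cc l"
proof -
  have "l div 2 \<le> (l + 1) div 2" by simp
  also have "\<dots> \<le> (l + 1) div 2 * ((l + 2) div 2)" by simp
  finally show ?thesis by (simp add: cc_def)
qed

lemma cc_odd: "cc (2 * m + 1) = (m + 1) * (m + 1)" by (simp add: cc_def)
lemma cc_even: "cc (2 * m) = m * (m + 1)" by (simp add: cc_def)

lemma finite_Dl: "finite (Dl l n)"
proof -
  have "Dl l n \<subseteq> toD ` {V. set V \<subseteq> {..n} \<and> length V = l}"
  proof
    fix p assume "p \<in> Dl l n"
    then have p: "is_distinct_partition p" "length p = l" "odd_pos_sum p = n" by (auto simp: Dl_def)
    have "sum_list (ofD p) \<le> n" using dp_opsum[OF p(1)] p(3) by simp
    then have "set (ofD p) \<subseteq> {..n}" using member_le_sum_list[of _ "ofD p"] by force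
    moreover have "toD (ofD p) = p" using toD_ofD[OF p(1)] by simp
    ultimately show "p \<in> toD ` {V. set V \<subseteq> {..n} \<and> length V = l}" using p(2) by force
  qed
  moreover have "finite (toD ` {V. set V \<subseteq> {..n} \<and> length V = l})"
    by (rule finite_imageI) (rule finite_lists_length_eq, simp)
  ultimately show ?thesis by (rule finite_subset)
qed

definition DO :: "nat \<Rightarrow> nat list set" where
  "DO n = {p. is_distinct_partition p \<and> odd (nparts p) \<and> odd_pos_sum p = n}"
definition DE :: "nat \<Rightarrow> nat list set" where
  "DE n = {p. is_distinct_partition p \<and> even (nparts p) \<and> odd_pos_sum p = n}"

lemma DO_union: "DO n = (\<Union>m\<in>{..n}. Dl (2 * m + 1) n)"
proof
  show "DO n \<subseteq> (\<Union>m\<in>{..n}. Dl (2 * m + 1) n)"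
  proof
    fix p assume "p \<in> DO n"
    then have p: "is_distinct_partition p" "odd (length p)" "odd_pos_sum p = n" by (auto simp: DO_def)
    then obtain m where m: "length p = 2 * m + 1" by (metis oddE)
    have "m \<le> n" using dp_opsum[OF p(1)] p(3) cc_ge[of "length p"] m by simp
    then show "p \<in> (\<Union>m\<in>{..n}. Dl (2 * m + 1) n)" using p m by (auto simp: Dl_def)
  qed
  show "(\<Union>m\<in>{..n}. Dl (2 * m + 1) n) \<subseteq> DO n" by (auto simp: Dl_def DO_def)
qed

lemma DE_union: "DE n = (\<Union>m\<in>{..n}. Dl (2 * m) n)"
proof
  show "DE n \<subseteq> (\<Union>m\<in>{..n}. Dl (2 * m) n)"
  proof
    fix p assume "p \<in> DE n"
    then have p: "is_distinct_partition p" "even (length p)" "odd_pos_sum p = n" by (auto simp: DE_def)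
    then obtain m where m: "length p = 2 * m" by (metis evenE)
    have "m \<le> n" using dp_opsum[OF p(1)] p(3) cc_ge[of "length p"] m by simp
    then show "p \<in> (\<Union>m\<in>{..n}. Dl (2 * m) n)" using p m by (auto simp: Dl_def)
  qed
  show "(\<Union>m\<in>{..n}. Dl (2 * m) n) \<subseteq> DE n" by (auto simp: Dl_def DE_def)
qed

lemma DO_card: "int (card (DO n)) = (\<Sum>m\<le>n. (fps_X ^ ((m + 1) * (m + 1)) * W (m + 1) * W m) $ n)"
proof -
  have "card (DO n) = (\<Sum>m\<le>n. card (Dl (2 * m + 1) n))"
    unfolding DO_union by (rule card_UN_disjoint) (simp, simp add: finite_Dl, auto simp: Dl_def)
  then have "int (card (DO n)) = (\<Sum>m\<le>n. int (card (Dl (2 * m + 1) n)))" by simp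
  also have "\<dots> = (\<Sum>m\<le>n. (fps_X ^ ((m + 1) * (m + 1)) * W (m + 1) * W m) $ n)"
  proof (rule sum.cong)
    fix m :: nat
    have "(2 * m + 1 + 1) div 2 = m + 1" "(2 * m + 1) div 2 = m" by simp_all
    then show "int (card (Dl (2 * m + 1) n)) = (fps_X ^ ((m + 1) * (m + 1)) * W (m + 1) * W m) $ n"
      using Dl_card[of "2 * m + 1" n] by (simp only: cc_odd)
  qed simp
  finally show ?thesis .
qed

lemma DE_card: "int (card (DE n)) = (\<Sum>m\<le>n. (fps_X ^ (m * (m + 1)) * W m * W m) $ n)"
proof -
  have "card (DE n) = (\<Sum>m\<le>n. card (Dl (2 * m) n))"
    unfolding DE_union by (rule card_UN_disjoint) (simp, simp add: finite_Dl, auto simp: Dl_def)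
  then have "int (card (DE n)) = (\<Sum>m\<le>n. int (card (Dl (2 * m) n)))" by simp
  also have "\<dots> = (\<Sum>m\<le>n. (fps_X ^ (m * (m + 1)) * W m * W m) $ n)"
  proof (rule sum.cong)
    fix m :: nat
    have "(2 * m + 1) div 2 = m" "(2 * m) div 2 = m" by simp_all
    then show "int (card (Dl (2 * m) n)) = (fps_X ^ (m * (m + 1)) * W m * W m) $ n"
      using Dl_card[of "2 * m" n] by (simp only: cc_even)
  qed simp
  finally show ?thesis .
qed

lemma signed_sum:
  "(\<Sum>p\<in>{p. is_distinct_partition p \<and> odd_pos_sum p = n}. (-1::int) ^ nparts p)
    = int (card (DE n)) - int (card (DO n))"
proof -
  have fO: "finite (DO n)" unfolding DO_union by (auto simp: finite_Dl)
  have fE: "finite (DE n)" unfolding DE_union by (auto simp: finite_Dl)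
  have e: "{p. is_distinct_partition p \<and> odd_pos_sum p = n} = DE n \<union> DO n"
    by (auto simp: DE_def DO_def)
  have d: "DE n \<inter> DO n = {}" by (auto simp: DE_def DO_def)
  have "(\<Sum>p\<in>DE n \<union> DO n. (-1::int) ^ nparts p) = (\<Sum>p\<in>DE n. (-1::int) ^ nparts p) + (\<Sum>p\<in>DO n. (-1::int) ^ nparts p)"
    by (rule sum.union_disjoint[OF fE fO d])
  also have "(\<Sum>p\<in>DE n. (-1::int) ^ nparts p) = (\<Sum>p\<in>DE n. 1)"
    by (rule sum.cong) (auto simp: DE_def)
  also have "(\<Sum>p\<in>DO n. (-1::int) ^ nparts p) = (\<Sum>p\<in>DO n. -1)"
    by (rule sum.cong) (auto simp: DO_def)
  finally show ?thesis unfolding e by simp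
qed



definition ES :: "nat \<Rightarrow> int fps" where "ES N = (\<Sum>m\<le>N. fps_X ^ (m * (m + 1)) * W m * W m)"
definition AS :: "nat \<Rightarrow> int fps" where "AS N = (\<Sum>m\<le>N. fps_X ^ ((m + 1) * (m + 1)) * W (m + 1) * W m)"
definition ZS :: "nat \<Rightarrow> int fps" where "ZS N = 1 + (\<Sum>k\<in>{1..N}. fps_X ^ (k * k + 2 * k) * W k * P2 k)"

lemma step_alg:
  fixes Y q x Wa Wb Wn :: "int fps"
  assumes "Wn = Wa - q * Wa"
  shows "Y * Wn * (Wn - Wa) + Y * q * Wa * Wa - Y * q * q * x * Wb * Wa - Y * q * q * Wa * ((1 - x) * Wa)
       = Y * q * q * x * Wa * (Wa - Wb)"
  unfolding assms by (simp add: algebra_simps)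

lemma tele: "ES N - AS N - (ZS N - fps_X) = fps_X ^ ((N + 1) * (N + 1)) * W N * (W N - W (Suc N))"
proof (induct N)
  case 0
  show ?case by (simp add: ES_def AS_def ZS_def W_0 algebra_simps)
next
  case (Suc N)
  define a where "a = Suc N"
  define Y where "Y = (fps_X :: int fps) ^ (a * a)"
  define q where "q = (fps_X :: int fps) ^ a"
  have e1: "ES (Suc N) = ES N + Y * q * W a * W a"
  proof -
    have "Suc N * (Suc N + 1) = a * a + a" by (simp add: a_def)
    then have "(fps_X :: int fps) ^ (Suc N * (Suc N + 1)) = Y * q" by (simp add: Y_def q_def power_add)
    then show ?thesis by (simp add: ES_def a_def)
  qed
  have e2: "AS (Suc N) = AS N + Y * q * q * fps_X * W (Suc a) * W a"
  proof -
    have "(Suc N + 1) * (Suc N + 1) = a * a + a + a + 1" by (simp add: a_def)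
    then have "(fps_X :: int fps) ^ ((Suc N + 1) * (Suc N + 1)) = Y * q * q * fps_X" by (simp add: Y_def q_def power_add)
    then show ?thesis by (simp add: AS_def a_def)
  qed
  have e3: "ZS (Suc N) = ZS N + Y * q * q * W a * ((1 - fps_X) * W a)"
  proof -
    have "Suc N * Suc N + 2 * Suc N = a * a + a + a" by (simp add: a_def)
    then have "(fps_X :: int fps) ^ (Suc N * Suc N + 2 * Suc N) = Y * q * q" by (simp add: Y_def q_def power_add)
    moreover have "P2 (Suc N) = (1 - fps_X) * W (Suc N)" by (rule P2_eq) simp
    ultimately show ?thesis by (simp add: ZS_def a_def)
  qed
  have w: "W a = W N + q * W a" using W_rec[of N] by (simp only: a_def q_def)
  have "W a - q * W a = W N + q * W a - q * W a" using w by (rule arg_cong[where f="\<lambda>z. z - q * W a"])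
  then have wn: "W N = W a - q * W a" by simp
  have ih: "ES N - AS N - (ZS N - fps_X) = Y * W N * (W N - W a)"
    using Suc by (simp add: Y_def a_def)
  have "ES (Suc N) - AS (Suc N) - (ZS (Suc N) - fps_X)
      = (ES N - AS N - (ZS N - fps_X)) + Y * q * W a * W a - Y * q * q * fps_X * W (Suc a) * W a
          - Y * q * q * W a * ((1 - fps_X) * W a)"
    unfolding e1 e2 e3 by (simp add: algebra_simps)
  also have "\<dots> = Y * q * q * fps_X * W a * (W a - W (Suc a))"
    unfolding ih by (rule step_alg[OF wn])
  also have "Y * q * q * fps_X = fps_X ^ ((Suc N + 1) * (Suc N + 1))"
  proof -
    have "(Suc N + 1) * (Suc N + 1) = a * a + a + a + 1" by (simp add: a_def)
    then show ?thesis by (simp add: Y_def q_def power_add)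
  qed
  finally show ?case by (simp add: a_def)
qed



lemma coeff_vanish: "n < k \<Longrightarrow> (fps_X ^ k * F * G) $ n = (0::int)"
  by (simp add: fps_X_power_mult_nth mult.assoc)

lemma part1: "int (card (DO n)) = int (card (Cset n))"
proof -
  define f where "f m = (fps_X ^ ((m + 1) * (m + 1)) * W (m + 1) * W m) $ n" for m
  have fn: "f n = 0" unfolding f_def by (rule coeff_vanish) (simp add: algebra_simps)
  have "int (card (DO n)) = (\<Sum>m\<le>n. f m)" by (simp add: DO_card f_def)
  also have "\<dots> = (\<Sum>m<n. f m)" using fn by (simp add: lessThan_Suc_atMost[symmetric])
  also have "\<dots> = (\<Sum>d\<in>{Suc 0..n}. (fps_X ^ (d * d) * W (d - 1) * W d) $ n)"
    by (subst sum.atLeast1_atMost_eq) (simp add: f_def ac_simps)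
  also have "\<dots> = int (card (Cset n))" by (simp add: Cset_card)
  finally show ?thesis .
qed

lemma part2: "int (card (DE n)) - int (card (DO n)) = - (if n = 1 then 1 else 0) + int (card (Zset n))"
proof -
  have t: "(ES n - AS n - (ZS n - fps_X)) $ n = 0"
    unfolding tele by (rule coeff_vanish) (simp add: algebra_simps)
  have "(ES n) $ n = int (card (DE n))" by (simp add: ES_def DE_card fps_sum_nth)
  moreover have "(AS n) $ n = int (card (DO n))" by (simp add: AS_def DO_card fps_sum_nth)
  moreover have "(ZS n) $ n = int (card (Zset n))" by (simp add: ZS_def Zset_card fps_sum_nth)
  ultimately show ?thesis using t by simp
qed

theorem theorem15:
  shows "Abs_fps (\<lambda>n. of_nat (card {p. is_distinct_partition p \<and> odd (nparts p) \<and> odd_pos_sum p = n}))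
           = (Abs_fps (\<lambda>n. of_nat (card {p. is_partition p \<and> crank p \<le> -1 \<and> psize p = n})) :: int fps)
       \<and> Abs_fps (\<lambda>n. \<Sum>p\<in>{p. is_distinct_partition p \<and> odd_pos_sum p = n}. (-1) ^ nparts p)
           = - fps_X + (Abs_fps (\<lambda>n. of_nat (card {p. is_partition p \<and> crank p = 0 \<and> psize p = n})) :: int fps)"
proof
  show "Abs_fps (\<lambda>n. of_nat (card {p. is_distinct_partition p \<and> odd (nparts p) \<and> odd_pos_sum p = n}))
           = (Abs_fps (\<lambda>n. of_nat (card {p. is_partition p \<and> crank p \<le> -1 \<and> psize p = n})) :: int fps)"
    using part1 by (simp add: fps_eq_iff DO_def Cset_def)
  show "Abs_fps (\<lambda>n. \<Sum>p\<in>{p. is_distinct_partition p \<and> odd_pos_sum p = n}. (-1) ^ nparts p)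
           = - fps_X + (Abs_fps (\<lambda>n. of_nat (card {p. is_partition p \<and> crank p = 0 \<and> psize p = n})) :: int fps)"
  proof (rule fps_ext)
    fix n
    show "Abs_fps (\<lambda>n. \<Sum>p\<in>{p. is_distinct_partition p \<and> odd_pos_sum p = n}. (-1) ^ nparts p) $ n
        = (- fps_X + (Abs_fps (\<lambda>n. of_nat (card {p. is_partition p \<and> crank p = 0 \<and> psize p = n})) :: int fps)) $ n"
      using signed_sum[of n] part2[of n] by (simp add: Zset_def)
  qed
qed



end
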